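(* Let $f:(0,\infty)\to\mathbb{R}$ be real analytic and not identically zero. Let $\mathcal I=\{x\in(0,\infty):f(x)=0\}$. Assume that: (1) for every sequence $x_j\in(0,\infty)$ with $x_j\to0$ or $x_j\to\infty$ and such that $\mathrm{dist}(x_j,\mathcal I)\to0$, we have $\kappa(f,x_j)\to\infty$; (2) both as $x\to0$ and as $x\to\infty$ we have $\limsup|H(f,x)|\leq C$ for some constant $C>0$, where $H(f,x)=\frac{x^2f(x)f''(x)}{f(x)^2+x^2f'(x)^2}$. The part of this hypothesis concerning $x\to0$ is automatically satisfied if $f$ admits an analytic extension to $(-\epsilon,\infty)$ for some $\epsilon>0$. Then $f$ is amenable.
   Context: Relative distance on $\mathbb{R}$: $\mathrm{dist}(x,y)=0$ if $x=y=0$, $\mathrm{dist}(x,y)=|\log(y/x)|$ if $xy>0$, and $\mathrm{dist}(x,y)=\infty$ otherwise; for a set $S$, $\mathrm{dist}(x,S)=\inf_{s\in S}\mathrm{dist}(x,s)$. For a real analytic function $f$ on an open set $\Omega\subseteq\mathbb{R}$, not identically zero, the condition number is $\kappa(f,x)=0$ if $x=0$, $\kappa(f,x)=\infty$ if $x\neq0$ and $f(x)=0$, and $\kappa(f,x)=|x|\,|f'(x)|/|f(x)|$ otherwise; set $\mu(f,x)=1+\kappa(f,x)$. The function $f:\Omega\to\mathbb{R}$ is called amenable if there is a constant $C>0$ such that for every $x\in\Omega$ with $\kappa(f,x)<\infty$, the set $B_x=\{y\in\mathbb{R}:\mathrm{dist}(y,x)<1/(C\mu(f,x))\}$ is contained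 in $\Omega$, and $\mu(f,y)\leq C\mu(f,x)$ for all $y\in B_x$. *)

theory Defs
  imports "HOL-Analysis.Analysis" "HOL-Library.Liminf_Limsup"
begin

definition real_analytic_on :: "(real \<Rightarrow> real) \<Rightarrow> real set \<Rightarrow> bool" where
  "real_analytic_on f S \<longleftrightarrow>
     (\<forall>x\<in>S. \<exists>r>0. \<exists>a::nat \<Rightarrow> real.
        \<forall>y. \<bar>y - x\<bar> < r \<longrightarrow> (\<lambda>n. a n * (y - x) ^ n) sums f y)"

definition reldist :: "real \<Rightarrow> real \<Rightarrow> ereal" where
  "reldist x y =
     (if x = 0 \<and> y = 0 then 0
      else if x * y > 0 then ereal \<bar>ln (y / x)\<bar>
      else \<infinity>)"

definition reldist_set :: "real \<Rightarrow> real set \<Rightarrow> ereal" where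
  "reldist_set x S = (INF s\<in>S. reldist x s)"

definition kappa :: "(real \<Rightarrow> real) \<Rightarrow> real \<Rightarrow> ereal" where
  "kappa f x =
     (if x = 0 then 0
      else if f x = 0 then \<infinity>
      else ereal (\<bar>x\<bar> * \<bar>deriv f x\<bar> / \<bar>f x\<bar>))"

definition mu :: "(real \<Rightarrow> real) \<Rightarrow> real \<Rightarrow> ereal" where
  "mu f x = 1 + kappa f x"

definition amenable :: "(real \<Rightarrow> real) \<Rightarrow> real set \<Rightarrow> bool" where
  "amenable f \<Omega> \<longleftrightarrow>
     (\<exists>C::real. C > 0 \<and>
        (\<forall>x\<in>\<Omega>. kappa f x < \<infinity> \<longrightarrow>
           (let B = {y. reldist y x < 1 / (ereal C * mu f x)} in
              B \<subseteq> \<Omega> \<and> (\<forall>y\<in>B. mu f y \<le> ereal C * mu f x))))"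

definition Hf :: "(real \<Rightarrow> real) \<Rightarrow> real \<Rightarrow> real" where
  "Hf f x = x^2 * f x * deriv (deriv f) x / ((f x)^2 + x^2 * (deriv f x)^2)"

end

theory Submission
  imports Defs
begin

lemma arctan_abs: "\<bar>arctan L\<bar> = arctan \<bar>L\<bar>"
  by (cases "L \<ge> 0") (auto simp: arctan_minus)

lemma arctan_gap_ub:
  assumes "\<bar>arctan L\<bar> \<le> pi/2 - \<eta>" "\<eta> > 0"
  shows "\<bar>L\<bar> \<le> 1/\<eta>"
proof (cases "L = 0")
  case True then show ?thesis using assms by simp
next
  case False
  then have p: "\<bar>L\<bar> > 0" by simp
  have "arctan (1/\<bar>L\<bar>) = pi/2 - arctan \<bar>L\<bar>"
    using arctan_inverse[of "\<bar>L\<bar>"] p by (simp add: inverse_eq_divide)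
  also have "\<dots> \<ge> \<eta>" using assms(1) by (simp add: arctan_abs)
  finally have "\<eta> \<le> 1/\<bar>L\<bar>" using arctan_le_self[of "1/\<bar>L\<bar>"] p by (simp add: inverse_eq_divide)
  then show ?thesis using p assms(2)
    by (simp add: field_simps)
qed

lemma arctan_lb_small:
  assumes "0 \<le> v" "v \<le> 1" shows "v/2 \<le> arctan v"
proof (cases "v = 0")
  case True then show ?thesis by simp
next
  case False
  then have "0 < v" using assms by simp
  from MVT2[OF this, of arctan "\<lambda>x. inverse (1 + x^2)"] obtain z where
    z: "z > 0" "z < v" "arctan v - arctan 0 = (v - 0) * inverse (1 + z^2)"
    using DERIV_arctan by blast
  have "z^2 \<le> 1" using z assms by (simp add: abs_square_le_1)
  moreover have "0 < 1 + z^2" by (simp add: add_pos_nonneg)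
  ultimately have "inverse (1 + z^2) \<ge> 1/2" by (simp add: divide_simps)
  then have "v * (1/2) \<le> v * inverse (1 + z^2)" using \<open>0 < v\<close> by (intro mult_left_mono) auto
  then show ?thesis using z by simp
qed

lemma arctan_gap_lb: "pi/2 - \<bar>arctan L\<bar> \<ge> 1/(2*(1+\<bar>L\<bar>))"
proof (cases "L = 0")
  case True then show ?thesis using pi_gt3 by simp
next
  case False
  then have p: "\<bar>L\<bar> > 0" by simp
  have e: "pi/2 - \<bar>arctan L\<bar> = arctan (1/\<bar>L\<bar>)"
    using arctan_inverse[of "\<bar>L\<bar>"] p by (simp add: arctan_abs inverse_eq_divide)
  show ?thesis
  proof (cases "1/\<bar>L\<bar> \<le> 1")
    case True
    have "1/\<bar>L\<bar>/2 \<le> arctan (1/\<bar>L\<bar>)" using arctan_lb_small[OF _ True] p by (simp add: inverse_eq_divide)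
    moreover have "1/(2*(1+\<bar>L\<bar>)) \<le> 1/\<bar>L\<bar>/2" using p by (simp add: field_simps)
    ultimately show ?thesis using e by simp
  next
    case False
    then have "arctan 1 \<le> arctan (1/\<bar>L\<bar>)" by (subst arctan_le_iff) linarith
    then have "pi/4 \<le> arctan (1/\<bar>L\<bar>)" by (simp add: arctan_one)
    moreover have "1/(2*(1+\<bar>L\<bar>)) \<le> 1/2" using p by (simp add: field_simps)
    ultimately show ?thesis using e pi_gt3 by linarith
  qed
qed

lemma one_sided:
  fixes g g1 g2 :: "real \<Rightarrow> real"
  assumes d1: "\<And>t. (g has_real_derivative g1 t) (at t)"
    and d2: "\<And>t. (g1 has_real_derivative g2 t) (at t)"
    and bnd: "\<And>t. g t \<noteq> 0 \<Longrightarrow> \<bar>(g t * g2 t - (g1 t)^2) / ((g t)^2 + (g1 t)^2)\<bar> \<le> M"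
    and ga: "g a \<noteq> 0" and ab: "a \<le> b"
    and small: "M * (b - a) < pi/2 - \<bar>arctan (g1 a / g a)\<bar>"
  shows "g b \<noteq> 0 \<and> \<bar>arctan (g1 b / g b) - arctan (g1 a / g a)\<bar> \<le> M * (b - a)"
proof -
  define \<psi> where "\<psi> t = arctan (g1 t / g t)" for t
  have M0: "M \<ge> 0" using bnd[OF ga] by linarith
  have dpsi: "(\<psi> has_real_derivative (g t * g2 t - (g1 t)^2) / ((g t)^2 + (g1 t)^2)) (at t)"
    if "g t \<noteq> 0" for t
  proof -
    have "(\<psi> has_real_derivative inverse (1 + (g1 t / g t)^2) * ((g2 t * g t - g1 t * g1 t) / (g t * g t))) (at t)"
      unfolding \<psi>_def
      by (rule DERIV_chain2[OF DERIV_arctan DERIV_divide[OF d2 d1]]) (use that in auto)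
    moreover have "inverse (1 + (g1 t / g t)^2) * ((g2 t * g t - g1 t * g1 t) / (g t * g t))
        = (g t * g2 t - (g1 t)^2) / ((g t)^2 + (g1 t)^2)"
    proof -
      have D: "(g t)^2 + (g1 t)^2 > 0" using that by (simp add: add_pos_nonneg)
      have "inverse (1 + (g1 t / g t)^2) = (g t)^2 / ((g t)^2 + (g1 t)^2)"
        using that D by (simp add: field_simps)
      moreover have "\<And>G G1 G2::real. G \<noteq> 0 \<Longrightarrow> G^2 + G1^2 > 0 \<Longrightarrow>
          G^2 / (G^2 + G1^2) * ((G2 * G - G1 * G1) / (G * G)) = (G * G2 - G1^2) / (G^2 + G1^2)"
        by (simp add: divide_simps power2_eq_square)
      ultimately show ?thesis using that D by simp
    qed
    ultimately show ?thesis by simp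
  qed
  have mvt: "\<bar>\<psi> t - \<psi> a\<bar> \<le> M * (t - a)"
    if tt: "a \<le> t" "\<forall>u. a \<le> u \<and> u \<le> t \<longrightarrow> g u \<noteq> 0" for t
  proof (cases "a = t")
    case True then show ?thesis by simp
  next
    case False
    then have "a < t" using that by simp
    from MVT2[OF this, of \<psi> "\<lambda>t. (g t * g2 t - (g1 t)^2) / ((g t)^2 + (g1 t)^2)"]
    obtain z where z: "z > a" "z < t" "\<psi> t - \<psi> a = (t - a) * ((g z * g2 z - (g1 z)^2) / ((g z)^2 + (g1 z)^2))"
      using dpsi tt by blast
    have "g z \<noteq> 0" using z tt by auto
    then have "\<bar>(g z * g2 z - (g1 z)^2) / ((g z)^2 + (g1 z)^2)\<bar> \<le> M" by (rule bnd)
    then have "\<bar>t - a\<bar> * \<bar>(g z * g2 z - (g1 z)^2) / ((g z)^2 + (g1 z)^2)\<bar> \<le> \<bar>t - a\<bar> * M"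
      by (intro mult_left_mono) auto
    then show ?thesis using z \<open>a < t\<close> by (simp add: abs_mult mult.commute)
  qed
  have contg: "isCont g t" for t using d1 DERIV_isCont by blast
  have nz: "\<forall>u. a \<le> u \<and> u \<le> b \<longrightarrow> g u \<noteq> 0"
  proof (rule ccontr)
    assume neg: "\<not> ?thesis"
    define S where "S = {u. a \<le> u \<and> u \<le> b \<and> g u = 0}"
    have Sne: "S \<noteq> {}" using neg S_def by auto
    have "closed S"
    proof -
      have "S = {a..b} \<inter> g -` {0}" unfolding S_def by auto
      moreover have "closed (g -` {0})"
        by (rule closed_vimage) (auto intro: contg continuous_at_imp_continuous_on)
      ultimately show ?thesis by auto
    qed
    have bdd: "bdd_below S" unfolding S_def by (rule bdd_belowI[of _ a]) auto
    define s where "s = Inf S"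
    have sS: "s \<in> S" using closed_contains_Inf[OF Sne bdd \<open>closed S\<close>] s_def by simp
    then have gs: "g s = 0" and sa: "a \<le> s" and sb: "s \<le> b" unfolding S_def by auto
    have sa': "a < s" using sa gs ga by (cases "a = s") auto
    have before: "g u \<noteq> 0" if "a \<le> u" "u < s" for u
    proof
      assume "g u = 0"
      then have "u \<in> S" using that sb unfolding S_def by auto
      then have "s \<le> u" unfolding s_def using bdd by (rule cInf_lower)
      then show False using that by simp
    qed
    define \<eta> where "\<eta> = pi/2 - \<bar>\<psi> a\<bar> - M * (b - a)"
    have \<eta>0: "\<eta> > 0" using small unfolding \<eta>_def \<psi>_def by simp
    have Lb: "\<bar>g1 u / g u\<bar> \<le> 1/\<eta>" if "a \<le> u" "u < s" for u
    proof -
      have "\<bar>\<psi> u - \<psi> a\<bar> \<le> M * (u - a)" using mvt[of u] that before by auto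
      also have "\<dots> \<le> M * (b - a)" using M0 that sb by (intro mult_left_mono) auto
      finally have "\<bar>arctan (g1 u / g u)\<bar> \<le> pi/2 - \<eta>" unfolding \<eta>_def \<psi>_def by simp
      then show ?thesis using \<eta>0 by (rule arctan_gap_ub)
    qed
    define lg where "lg t = ln ((g t)^2)" for t
    define c where "c = exp (ln ((g a)^2) - 2/\<eta> * (b - a))"
    have c0: "c > 0" unfolding c_def by simp
    have lower: "(g u)^2 \<ge> c" if "a \<le> u" "u < s" for u
    proof (cases "a = u")
      case True
      have "2/\<eta> * (b - a) \<ge> 0" using \<eta>0 ab by simp
      then have "c \<le> exp (ln ((g a)^2))" unfolding c_def by simp
      also have "\<dots> = (g a)^2" using ga by simp
      finally show ?thesis using True by simp
    next
      case False
      then have au: "a < u" using that by simp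
      have dl: "(lg has_real_derivative 2 * (g1 x / g x)) (at x)" if "a \<le> x" "x \<le> u" for x
      proof -
        have gx: "g x \<noteq> 0" using before that \<open>u < s\<close> by auto
        have "(lg has_real_derivative inverse ((g x)^2) * (of_nat 2 * (g1 x * g x ^ (2 - Suc 0)))) (at x)"
          unfolding lg_def
          by (rule DERIV_chain2[OF DERIV_ln DERIV_power[OF d1]]) (use gx in simp)
        moreover have "inverse ((g x)^2) * (of_nat 2 * (g1 x * g x ^ (2 - Suc 0))) = 2 * (g1 x / g x)" using gx
          by (simp add: field_simps power2_eq_square)
        ultimately show ?thesis by simp
      qed
      from MVT2[OF au dl] obtain z where z: "z > a" "z < u" "lg u - lg a = (u - a) * (2 * (g1 z / g z))"
        by blast
      have "\<bar>g1 z / g z\<bar> \<le> 1/\<eta>" using Lb[of z] z that by simp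
      moreover have "\<bar>(u - a) * (2 * (g1 z / g z))\<bar> = (u - a) * (2 * \<bar>g1 z / g z\<bar>)"
        using au by (simp add: abs_mult)
      ultimately have "\<bar>(u - a) * (2 * (g1 z / g z))\<bar> \<le> (b - a) * (2 * (1/\<eta>))"
        using au that sb \<eta>0
        by (simp only:, intro mult_mono) auto
      then have A: "\<bar>lg u - lg a\<bar> \<le> (b - a) * (2 * (1/\<eta>))" unfolding z(3) .
      have "(b - a) * (2 * (1/\<eta>)) = 2/\<eta> * (b - a)" by simp
      then have "lg u \<ge> lg a - 2/\<eta> * (b - a)" using A by arith
      then have "exp (lg u) \<ge> c" unfolding c_def lg_def by simp
      moreover have "(g u)^2 > 0" using before[OF that] by simp
      ultimately show ?thesis unfolding lg_def by simp
    qed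
    have lim: "((\<lambda>u. (g u)^2) \<longlongrightarrow> (g s)^2) (at_left s)"
      using contg[of s] by (intro tendsto_intros) (simp add: isCont_def filterlim_at_split)
    have ev: "eventually (\<lambda>u. c \<le> (g u)^2) (at_left s)"
      using eventually_at_left_real[OF sa'] by eventually_elim (use lower in auto)
    have "c \<le> (g s)^2" by (rule tendsto_lowerbound[OF lim ev]) simp
    then show False using gs c0 by simp
  qed
  show ?thesis using nz ab mvt[of b] unfolding \<psi>_def by auto
qed

lemma two_sided:
  fixes g g1 g2 :: "real \<Rightarrow> real"
  assumes d1: "\<And>t. (g has_real_derivative g1 t) (at t)"
    and d2: "\<And>t. (g1 has_real_derivative g2 t) (at t)"
    and bnd: "\<And>t. g t \<noteq> 0 \<Longrightarrow> \<bar>(g t * g2 t - (g1 t)^2) / ((g t)^2 + (g1 t)^2)\<bar> \<le> M"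
    and ga: "g a \<noteq> 0"
    and small: "M * \<bar>b - a\<bar> < pi/2 - \<bar>arctan (g1 a / g a)\<bar>"
  shows "g b \<noteq> 0 \<and> \<bar>arctan (g1 b / g b) - arctan (g1 a / g a)\<bar> \<le> M * \<bar>b - a\<bar>"
proof (cases "a \<le> b")
  case True
  then show ?thesis using one_sided[OF d1 d2 bnd ga True] small by simp
next
  case False
  define h where "h t = g (- t)" for t
  define h1 where "h1 t = - g1 (- t)" for t
  define h2 where "h2 t = g2 (- t)" for t
  have e1: "(h has_real_derivative h1 t) (at t)" for t
    unfolding h_def h1_def
    using DERIV_chain2[OF d1 DERIV_minus[OF DERIV_ident], of t] by simp
  have e2: "(h1 has_real_derivative h2 t) (at t)" for t
    unfolding h2_def h1_def
    using DERIV_minus[OF DERIV_chain2[OF d2 DERIV_minus[OF DERIV_ident], of t]] by simp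
  have bh: "\<bar>(h t * h2 t - (h1 t)^2) / ((h t)^2 + (h1 t)^2)\<bar> \<le> M" if "h t \<noteq> 0" for t
    using bnd[of "-t"] that unfolding h_def h1_def h2_def by simp
  have ha: "h (-a) \<noteq> 0" using ga unfolding h_def by simp
  have ab: "-a \<le> -b" using False by simp
  have sm: "M * (- b - - a) < pi/2 - \<bar>arctan (h1 (-a) / h (-a))\<bar>"
    using small False unfolding h_def h1_def by (simp add: arctan_minus)
  from one_sided[OF e1 e2 bh ha ab sm] show ?thesis
    using False unfolding h_def h1_def by (simp add: arctan_minus abs_minus_commute)
qed

lemma ps_deriv:
  fixes a :: "nat \<Rightarrow> real" and f :: "real \<Rightarrow> real"
  assumes r: "r > 0" and S0: "\<forall>y. \<bar>y - z\<bar> < r \<longrightarrow> (\<lambda>n. a n * (y - z)^n) sums f y"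
  shows "\<forall>y. \<bar>y - z\<bar> < r \<longrightarrow> (f has_real_derivative deriv f y) (at y)"
    and "\<forall>y. \<bar>y - z\<bar> < r \<longrightarrow> (\<lambda>n. diffs a n * (y - z)^n) sums deriv f y"
proof -
  have S: "\<And>y. \<bar>y - z\<bar> < r \<Longrightarrow> (\<lambda>n. a n * (y - z)^n) sums f y" using S0 by blast
  define P where "P w = (\<Sum>n. a n * w^n)" for w
  have summ: "summable (\<lambda>n. a n * w^n)" if "norm w < r" for w :: real
    using S[of "z + w"] that by (simp add: sums_summable)
  have fP: "f y = P (y - z)" if "y \<in> ball z r" for y
    using S[of y] that unfolding P_def by (simp add: dist_real_def sums_iff abs_minus_commute)
  have D: "(f has_real_derivative (\<Sum>n. diffs a n * (y - z)^n)) (at y)" if "\<bar>y - z\<bar> < r" for y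
  proof -
    have "(P has_real_derivative (\<Sum>n. diffs a n * (y - z)^n)) (at (y - z))"
      unfolding P_def by (rule termdiffs_strong'[of r]) (use summ that in auto)
    moreover have dlin: "((\<lambda>y. y - z) has_real_derivative 1) (at y)"
      using DERIV_diff[OF DERIV_ident DERIV_const, of z y] by simp
    ultimately have "((\<lambda>y. P (y - z)) has_real_derivative (\<Sum>n. diffs a n * (y - z)^n) * 1) (at y)"
      by (rule DERIV_chain2)
    then have "((\<lambda>y. P (y - z)) has_real_derivative (\<Sum>n. diffs a n * (y - z)^n)) (at y)" by simp
    then show ?thesis
      by (rule has_field_derivative_transform_within_open[where S = "ball z r"])
         (use that fP in \<open>auto simp: dist_real_def abs_minus_commute\<close>)
  qed
  show "\<forall>y. \<bar>y - z\<bar> < r \<longrightarrow> (f has_real_derivative deriv f y) (at y)"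
  proof (intro allI impI)
    fix y assume that: "\<bar>y - z\<bar> < r"
    show "(f has_real_derivative deriv f y) (at y)"
      using D[OF that] DERIV_imp_deriv by metis
  qed
  show "\<forall>y. \<bar>y - z\<bar> < r \<longrightarrow> (\<lambda>n. diffs a n * (y - z)^n) sums deriv f y"
  proof (intro allI impI)
    fix y assume that: "\<bar>y - z\<bar> < r"
    have "summable (\<lambda>n. diffs a n * (y - z)^n)"
      by (rule termdiff_converges[of _ r]) (use summ that in auto)
    then show "(\<lambda>n. diffs a n * (y - z)^n) sums deriv f y" using DERIV_imp_deriv[OF D[OF that]] by (simp add: summable_sums)
  qed
qed

lemma ps_regular:
  fixes a :: "nat \<Rightarrow> real" and f :: "real \<Rightarrow> real"
  assumes r: "r > 0" and S0: "\<forall>y. \<bar>y - z\<bar> < r \<longrightarrow> (\<lambda>n. a n * (y - z)^n) sums f y"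
    and y: "\<bar>y - z\<bar> < r"
  shows "(f has_real_derivative deriv f y) (at y)"
    and "(deriv f has_real_derivative deriv (deriv f) y) (at y)"
    and "(deriv (deriv f) has_real_derivative deriv (deriv (deriv f)) y) (at y)"
    and "f z = a 0" and "deriv f z = a 1"
proof -
  note S1 = ps_deriv(2)[OF r S0]
  note S2 = ps_deriv(2)[OF r S1]
  show "(f has_real_derivative deriv f y) (at y)" using ps_deriv(1)[OF r S0] y by blast
  show "(deriv f has_real_derivative deriv (deriv f) y) (at y)" using ps_deriv(1)[OF r S1] y by blast
  show "(deriv (deriv f) has_real_derivative deriv (deriv (deriv f)) y) (at y)" using ps_deriv(1)[OF r S2] y by blast
  have "(\<lambda>n. a n * 0^n) sums f z" using S0[rule_format, of z] r by simp
  then show "f z = a 0" by (simp add: powser_sums_zero_iff)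
  have "(\<lambda>n. diffs a n * 0^n) sums deriv f z" using S1[rule_format, of z] r by simp
  then show "deriv f z = a 1" by (simp add: powser_sums_zero_iff diffs_def)
qed

lemma HfD_le:
  fixes N A B c :: real
  assumes "0 \<le> N" "0 \<le> A" "0 < B" "0 < c"
  shows "c * N / (A + c * B) \<le> N / B"
proof -
  have "0 \<le> N * A" using assms by simp
  then have "c * N * B \<le> N * (A + c * B)" by (simp add: algebra_simps)
  then show ?thesis using assms by (simp add: divide_simps add_nonneg_pos)
qed

lemma local_bound:
  fixes f :: "real \<Rightarrow> real" and z :: real
  assumes analytic: "real_analytic_on f {0<..}" and z: "z > 0"
  shows "\<exists>e>0. \<exists>K. \<forall>x. \<bar>x - z\<bar> < e \<longrightarrow> f x \<noteq> 0 \<longrightarrow> \<bar>Hf f x\<bar> \<le> K"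
proof -
  have "\<exists>r>0. \<exists>a::nat\<Rightarrow>real. \<forall>y. \<bar>y - z\<bar> < r \<longrightarrow> (\<lambda>n. a n * (y - z)^n) sums f y"
    using analytic z unfolding real_analytic_on_def by simp
  then obtain r a where r: "r > 0" and S0: "\<forall>y. \<bar>y - z\<bar> < r \<longrightarrow> (\<lambda>n. a n * (y - z)^n) sums f y"
    by blast
  have S: "\<And>y. \<bar>y - z\<bar> < r \<Longrightarrow> (\<lambda>n. a n * (y - z)^n) sums f y" using S0 by blast
  have reg1: "(f has_real_derivative deriv f y) (at y)"
    and reg2: "(deriv f has_real_derivative deriv (deriv f) y) (at y)"
    and reg3: "(deriv (deriv f) has_real_derivative deriv (deriv (deriv f)) y) (at y)"
    if "\<bar>y - z\<bar> < r" for y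
    using ps_regular(1-3)[OF r S0 that] by auto
  have z0: "\<bar>z - z\<bar> < r" using r by simp
  have reg4: "f z = a 0" and reg5: "deriv f z = a 1"
    using ps_regular(4,5)[OF r S0 z0] by auto
  have Hf_eq: "Hf f = (\<lambda>x. x^2 * f x * deriv (deriv f) x / ((f x)^2 + x^2 * (deriv f x)^2))"
    by (rule ext) (simp add: Hf_def)
  show ?thesis
  proof (cases "f z \<noteq> 0 \<or> deriv f z \<noteq> 0")
    case True
    have den: "(f z)^2 + z^2 * (deriv f z)^2 \<noteq> 0"
    proof -
      have "(f z)^2 + z^2 * (deriv f z)^2 > 0"
        using True z by (auto simp: add_pos_nonneg add_nonneg_pos)
      then show ?thesis by simp
    qed
    have c0: "isCont f z" using reg1[OF z0] DERIV_isCont by blast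
    have c1: "isCont (deriv f) z" using reg2[OF z0] DERIV_isCont by blast
    have c2: "isCont (deriv (deriv f)) z" using reg3[OF z0] DERIV_isCont by blast
    have "isCont (Hf f) z" unfolding Hf_eq
      by (intro continuous_intros c0 c1 c2 den)
    then have "\<exists>d>0. \<forall>x. dist x z < d \<longrightarrow> dist (Hf f x) (Hf f z) < 1"
      unfolding continuous_at_eps_delta by (rule mp[OF spec[where x="1::real"]]) simp_all
    then obtain d where d: "d > 0" "\<And>x. dist x z < d \<Longrightarrow> dist (Hf f x) (Hf f z) < 1"
      by blast
    have "\<forall>x. \<bar>x - z\<bar> < d \<longrightarrow> f x \<noteq> 0 \<longrightarrow> \<bar>Hf f x\<bar> \<le> \<bar>Hf f z\<bar> + 1"
    proof (intro allI impI)
      fix x assume "\<bar>x - z\<bar> < d"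
      then have "\<bar>Hf f x - Hf f z\<bar> < 1" using d(2) by (simp add: dist_real_def)
      then show "\<bar>Hf f x\<bar> \<le> \<bar>Hf f z\<bar> + 1" by linarith
    qed
    then show ?thesis using d(1) by blast
  next
    case False
    then have fz: "f z = 0" and f'z: "deriv f z = 0" by auto
    show ?thesis
    proof (cases "\<forall>n. a n = 0")
      case True
      have "f x = 0" if "\<bar>x - z\<bar> < r" for x
        using S[OF that] True by (simp add: sums_0 sums_unique2)
      then show ?thesis using r by blast
    next
      case False
      then have ex: "\<exists>n. a n \<noteq> 0" by simp
      define k where "k = (LEAST n. a n \<noteq> 0)"
      have ak: "a k \<noteq> 0" unfolding k_def using LeastI_ex[OF ex] .
      have below: "a i = 0" if "i < k" for i using not_less_Least[OF that[unfolded k_def]] by simp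
      have a0: "a 0 = 0" and a1: "a 1 = 0" using reg4 reg5 fz f'z by auto
      have "k \<noteq> 0" using ak a0 by (intro notI) simp
      moreover have "k \<noteq> 1" using ak a1 by (intro notI) simp
      ultimately have "k \<ge> 2" by linarith
      then have "\<exists>m. k = m + 2" by (intro exI[of _ "k - 2"]) simp
      then obtain m where km: "k = m + 2" by blast
      define b where "b n = a (n + k)" for n
      define q where "q y = (\<Sum>n. b n * (y - z)^n)" for y
      have Sq: "(\<lambda>n. b n * (y - z)^n) sums q y \<and> f y = (y - z)^k * q y" if "\<bar>y - z\<bar> < r" for y
      proof (cases "y = z")
        case True
        have "(\<lambda>n. b n * (y - z)^n) sums b 0" using True powser_sums_zero by simp
        then show ?thesis using True fz km unfolding q_def by (simp add: sums_iff)
      next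
        case False
        define h where "h = y - z"
        have h0: "h \<noteq> 0" using False h_def by simp
        have "(\<lambda>i. a (i + k) * h^(i + k)) sums (f y - (\<Sum>i<k. a i * h^i))"
          using sums_iff_shift'[of "\<lambda>i. a i * h^i" k "f y"] S[OF that] unfolding h_def by simp
        moreover have "(\<Sum>i<k. a i * h^i) = 0" using below by simp
        ultimately have "(\<lambda>i. a (i + k) * h^(i + k)) sums f y" by simp
        then have "(\<lambda>i. a (i + k) * h^(i + k) / h^k) sums (f y / h^k)" by (rule sums_divide)
        moreover have "(\<lambda>i. a (i + k) * h^(i + k) / h^k) = (\<lambda>i. b i * h^i)"
          using h0 by (simp add: b_def power_add)
        ultimately have "(\<lambda>i. b i * h^i) sums (f y / h^k)" by simp
        then show ?thesis using h0 unfolding q_def h_def[symmetric] by (simp add: sums_iff)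
      qed
      have Sq': "\<forall>y. \<bar>y - z\<bar> < r \<longrightarrow> (\<lambda>n. b n * (y - z)^n) sums q y" using Sq by blast
      have rq1: "(q has_real_derivative deriv q y) (at y)"
        and rq2: "(deriv q has_real_derivative deriv (deriv q) y) (at y)"
        and rq3: "(deriv (deriv q) has_real_derivative deriv (deriv (deriv q)) y) (at y)"
        if "\<bar>y - z\<bar> < r" for y
        using ps_regular(1-3)[OF r Sq' that] by auto
      have rq4: "q z = b 0"
        using ps_regular(4)[OF r Sq' z0] by auto
      have qz: "q z = a k" using rq4 unfolding b_def by simp
      define Q1 where "Q1 = deriv q"
      define Q2 where "Q2 = deriv Q1"
      define F1 where "F1 y = of_nat (m+2) * (y - z)^(m+1) * q y + (y - z)^(m+2) * Q1 y" for y
      define F2 where "F2 y = of_nat (m+2) * of_nat (m+1) * (y - z)^m * q y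
           + 2 * of_nat (m+2) * (y - z)^(m+1) * Q1 y + (y - z)^(m+2) * Q2 y" for y
      have ball_eq: "ball z r = {y. \<bar>y - z\<bar> < r}" by (auto simp: dist_real_def abs_minus_commute)
      have dF0: "((\<lambda>y. (y - z)^(m+2) * q y) has_real_derivative F1 y) (at y)" if "\<bar>y - z\<bar> < r" for y
        unfolding F1_def Q1_def
        by (rule derivative_eq_intros refl rq1[OF that] | simp add: algebra_simps)+
      have df: "deriv f y = F1 y" if "\<bar>y - z\<bar> < r" for y
      proof -
        have "(f has_real_derivative F1 y) (at y)"
          by (rule has_field_derivative_transform_within_open[OF dF0[OF that], of "ball z r"])
             (use that Sq km in \<open>auto simp: dist_real_def abs_minus_commute\<close>)
        then show ?thesis by (rule DERIV_imp_deriv)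
      qed
      have dF1: "(F1 has_real_derivative F2 y) (at y)" if "\<bar>y - z\<bar> < r" for y
        unfolding F1_def F2_def Q2_def Q1_def
        by (rule derivative_eq_intros refl rq1[OF that] rq2[OF that] | simp add: algebra_simps)+
      have ddf: "deriv (deriv f) y = F2 y" if "\<bar>y - z\<bar> < r" for y
      proof -
        have "(deriv f has_real_derivative F2 y) (at y)"
          by (rule has_field_derivative_transform_within_open[OF dF1[OF that], of "ball z r"])
             (use that df in \<open>auto simp: dist_real_def abs_minus_commute\<close>)
        then show ?thesis by (rule DERIV_imp_deriv)
      qed
      define S1 where "S1 y = of_nat (m+2) * q y + (y - z) * Q1 y" for y
      define R1 where "R1 y = of_nat (m+2) * of_nat (m+1) * q y + 2 * of_nat (m+2) * (y - z) * Q1 y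
          + (y - z)^2 * Q2 y" for y
      define \<rho> where "\<rho> y = \<bar>q y * R1 y\<bar> / (S1 y)^2" for y
      have cq: "isCont q z" using rq1[OF z0] DERIV_isCont by blast
      have cq1: "isCont Q1 z" using rq2[OF z0] DERIV_isCont unfolding Q1_def by blast
      have cq2: "isCont Q2 z" using rq3[OF z0] DERIV_isCont unfolding Q2_def Q1_def by blast
      have S1z: "S1 z \<noteq> 0" unfolding S1_def using qz ak by simp
      have cS1: "isCont S1 z" unfolding S1_def by (intro continuous_intros cq cq1)
      have "isCont \<rho> z" unfolding \<rho>_def R1_def
        by (intro continuous_intros cq cq1 cq2 cS1) (use S1z in simp)
      then have "\<exists>d>0. \<forall>x. dist x z < d \<longrightarrow> dist (\<rho> x) (\<rho> z) < 1"
        unfolding continuous_at_eps_delta by (rule mp[OF spec[where x="1::real"]]) simp_all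
      then obtain d1 where d1: "d1 > 0" "\<And>x. dist x z < d1 \<Longrightarrow> dist (\<rho> x) (\<rho> z) < 1"
        by blast
      have epsS1: "\<forall>\<epsilon>>0. \<exists>d>0. \<forall>x. dist x z < d \<longrightarrow> dist (S1 x) (S1 z) < \<epsilon>"
        using cS1 unfolding continuous_at_eps_delta .
      have "\<exists>d>0. \<forall>x. dist x z < d \<longrightarrow> dist (S1 x) (S1 z) < \<bar>S1 z\<bar>"
        using epsS1[rule_format, of "\<bar>S1 z\<bar>"] S1z by simp
      then obtain d2 where d2: "d2 > 0" "\<And>x. dist x z < d2 \<Longrightarrow> dist (S1 x) (S1 z) < \<bar>S1 z\<bar>"
        by blast
      define e where "e = min r (min z (min d1 d2))"
      have e0: "e > 0" unfolding e_def using r z d1 d2 by simp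
      have fin: "\<forall>x. \<bar>x - z\<bar> < e \<longrightarrow> f x \<noteq> 0 \<longrightarrow> \<bar>Hf f x\<bar> \<le> \<rho> z + 1"
      proof (intro allI impI)
        fix x assume x: "\<bar>x - z\<bar> < e" "f x \<noteq> 0"
        define h where "h = x - z"
        have xr: "\<bar>x - z\<bar> < r" and x0: "x > 0" using x e_def by auto
        have hne: "h \<noteq> 0" using x fz h_def by auto
        have S1x: "S1 x \<noteq> 0" using d2(2)[of x] x e_def by (auto simp: dist_real_def)
        have fx: "f x = h^(m+2) * q x" using Sq[OF xr] km h_def by simp
        have f1x: "deriv f x = h^(m+1) * S1 x"
          using df[OF xr] unfolding F1_def S1_def h_def by (simp add: algebra_simps)
        have f2x: "deriv (deriv f) x = h^m * R1 x"
          using ddf[OF xr] unfolding F2_def R1_def h_def by (simp add: algebra_simps power2_eq_square)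
        have B0: "(deriv f x)^2 > 0" using f1x hne S1x by simp
        have "\<bar>Hf f x\<bar> = x^2 * \<bar>f x * deriv (deriv f) x\<bar> / ((f x)^2 + x^2 * (deriv f x)^2)"
          unfolding Hf_def by (simp add: abs_mult abs_divide)
        also have "\<dots> \<le> \<bar>f x * deriv (deriv f) x\<bar> / (deriv f x)^2"
          by (rule HfD_le) (use B0 x0 in auto)
        also have "\<dots> = \<rho> x"
        proof -
          have pw: "h^(m+2) * h^m = (h^(m+1))^2" by (simp add: power2_eq_square power_add[symmetric])
          have "f x * deriv (deriv f) x = (h^(m+1))^2 * (q x * R1 x)"
            unfolding fx f2x pw[symmetric] by (simp add: algebra_simps)
          moreover have "(deriv f x)^2 = (h^(m+1))^2 * (S1 x)^2" unfolding f1x by (simp add: power_mult_distrib)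
          ultimately show ?thesis unfolding \<rho>_def using hne by (simp add: abs_mult)
        qed
        also have "\<dots> \<le> \<rho> z + 1" using d1(2)[of x] x e_def by (auto simp: dist_real_def)
        finally show "\<bar>Hf f x\<bar> \<le> \<rho> z + 1" .
      qed
      show ?thesis using e0 fin by blast
    qed
  qed
qed

lemma compact_bound:
  fixes h :: "real \<Rightarrow> real"
  assumes S: "compact S" and loc: "\<forall>z\<in>S. \<exists>e>0. \<exists>K. \<forall>x. \<bar>x - z\<bar> < e \<longrightarrow> P x \<longrightarrow> \<bar>h x\<bar> \<le> K"
  shows "\<exists>K. \<forall>x\<in>S. P x \<longrightarrow> \<bar>h x\<bar> \<le> K"
proof -
  from loc have "\<forall>z\<in>S. \<exists>p. fst p > 0 \<and> (\<forall>x. \<bar>x - z\<bar> < fst p \<longrightarrow> P x \<longrightarrow> \<bar>h x\<bar> \<le> snd p)"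
    by force
  then obtain p where p: "\<And>z. z \<in> S \<Longrightarrow> fst (p z) > 0 \<and> (\<forall>x. \<bar>x - z\<bar> < fst (p z) \<longrightarrow> P x \<longrightarrow> \<bar>h x\<bar> \<le> snd (p z))"
    by (metis bchoice)
  define e where "e z = fst (p z)" for z
  define K where "K z = snd (p z)" for z
  have cover: "S \<subseteq> \<Union> ((\<lambda>z. ball z (e z)) ` S)"
  proof
    fix x assume "x \<in> S"
    then have "x \<in> ball x (e x)" using p[of x] unfolding e_def by simp
    then show "x \<in> \<Union> ((\<lambda>z. ball z (e z)) ` S)" using \<open>x \<in> S\<close> by blast
  qed
  obtain C' where C': "C' \<subseteq> S" "finite C'" "S \<subseteq> \<Union> ((\<lambda>z. ball z (e z)) ` C')"
    by (rule compactE_image[OF S _ cover]) auto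
  have "\<forall>x\<in>S. P x \<longrightarrow> \<bar>h x\<bar> \<le> (\<Sum>z\<in>C'. \<bar>K z\<bar>)"
  proof (intro ballI impI)
    fix x assume x: "x \<in> S" "P x"
    then obtain z where z: "z \<in> C'" "x \<in> ball z (e z)" using C'(3) by blast
    then have "\<bar>x - z\<bar> < e z" by (simp add: dist_real_def abs_minus_commute)
    then have "\<bar>h x\<bar> \<le> K z" using p[of z] z C'(1) x unfolding e_def K_def by blast
    also have "\<dots> \<le> \<bar>K z\<bar>" by simp
    also have "\<dots> \<le> (\<Sum>z\<in>C'. \<bar>K z\<bar>)" by (rule member_le_sum) (use z C' in auto)
    finally show "\<bar>h x\<bar> \<le> (\<Sum>z\<in>C'. \<bar>K z\<bar>)" .
  qed
  then show ?thesis by blast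
qed

lemma global_bound:
  fixes f :: "real \<Rightarrow> real"
  assumes analytic: "real_analytic_on f {0<..}"
    and H_cond: "\<exists>C>0. Limsup (at_right 0) (\<lambda>x. ereal \<bar>Hf f x\<bar>) \<le> ereal C \<and>
                       Limsup at_top (\<lambda>x. ereal \<bar>Hf f x\<bar>) \<le> ereal C"
  shows "\<exists>B. \<forall>x>0. f x \<noteq> 0 \<longrightarrow> \<bar>Hf f x\<bar> \<le> B"
proof -
  obtain C0 where C0: "C0 > 0" and L1: "Limsup (at_right 0) (\<lambda>x. ereal \<bar>Hf f x\<bar>) \<le> ereal C0"
    and L2: "Limsup at_top (\<lambda>x. ereal \<bar>Hf f x\<bar>) \<le> ereal C0"
    using H_cond by blast
  have "Limsup (at_right 0) (\<lambda>x. ereal \<bar>Hf f x\<bar>) < ereal (C0 + 1)"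
    using L1 by (rule le_less_trans) simp
  then have "eventually (\<lambda>x. ereal \<bar>Hf f x\<bar> < ereal (C0 + 1)) (at_right 0)"
    by (rule Limsup_lessD)
  then obtain d where d: "d > 0" "\<And>y. y > 0 \<Longrightarrow> y < d \<Longrightarrow> \<bar>Hf f y\<bar> < C0 + 1"
    unfolding eventually_at_right_field by auto
  have "Limsup at_top (\<lambda>x. ereal \<bar>Hf f x\<bar>) < ereal (C0 + 1)"
    using L2 by (rule le_less_trans) simp
  then have "eventually (\<lambda>x. ereal \<bar>Hf f x\<bar> < ereal (C0 + 1)) at_top"
    by (rule Limsup_lessD)
  then obtain N where N: "\<And>y. y \<ge> N \<Longrightarrow> \<bar>Hf f y\<bar> < C0 + 1"
    unfolding eventually_at_top_linorder by auto
  have loc: "\<forall>z\<in>{d..N}. \<exists>e>0. \<exists>K. \<forall>x. \<bar>x - z\<bar> < e \<longrightarrow> f x \<noteq> 0 \<longrightarrow> \<bar>Hf f x\<bar> \<le> K"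
  proof
    fix z assume "z \<in> {d..N}"
    then have "z > 0" using d by auto
    then show "\<exists>e>0. \<exists>K. \<forall>x. \<bar>x - z\<bar> < e \<longrightarrow> f x \<noteq> 0 \<longrightarrow> \<bar>Hf f x\<bar> \<le> K"
      by (rule local_bound[OF analytic])
  qed
  obtain Km where Km: "\<forall>x\<in>{d..N}. f x \<noteq> 0 \<longrightarrow> \<bar>Hf f x\<bar> \<le> Km"
    using compact_bound[OF compact_Icc loc] by blast
  have "\<forall>x>0. f x \<noteq> 0 \<longrightarrow> \<bar>Hf f x\<bar> \<le> max (C0 + 1) Km"
  proof (intro allI impI)
    fix x :: real assume x: "x > 0" "f x \<noteq> 0"
    show "\<bar>Hf f x\<bar> \<le> max (C0 + 1) Km"
    proof (cases "x < d")
      case True then show ?thesis using d(2)[OF x(1)] by simp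
    next
      case False
      show ?thesis
      proof (cases "x \<ge> N")
        case True then show ?thesis using N[OF True] by simp
      next
        case False
        then have "x \<in> {d..N}" using \<open>\<not> x < d\<close> by simp
        then show ?thesis using Km x by force
      qed
    qed
  qed
  then show ?thesis by blast
qed

lemma expr_bound:
  fixes F P Q B :: real
  assumes F: "F \<noteq> 0" and H: "\<bar>F * Q / (F^2 + P^2)\<bar> \<le> B"
  shows "\<bar>(F * (P + Q) - P^2) / (F^2 + P^2)\<bar> \<le> B + 3/2"
proof -
  define D where "D = F^2 + P^2"
  have D0: "D > 0" unfolding D_def using F by (simp add: add_pos_nonneg)
  have e: "(F * (P + Q) - P^2) / D = F * P / D + F * Q / D - P^2 / D"
    by (simp add: diff_divide_distrib add_divide_distrib algebra_simps)
  have "2 * \<bar>F * P\<bar> \<le> D"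
  proof -
    have "0 \<le> (\<bar>F\<bar> - \<bar>P\<bar>)^2" by simp
    then show ?thesis unfolding D_def by (simp add: power2_eq_square algebra_simps abs_mult)
  qed
  then have a1: "\<bar>F * P / D\<bar> \<le> 1/2" using D0 by (simp add: abs_divide divide_simps)
  have "P^2 \<le> D" unfolding D_def by simp
  then have a2: "\<bar>P^2 / D\<bar> \<le> 1" using D0 by (simp add: abs_divide divide_simps)
  have "\<bar>(F * (P + Q) - P^2) / D\<bar> \<le> \<bar>F * P / D\<bar> + \<bar>F * Q / D\<bar> + \<bar>P^2 / D\<bar>"
    unfolding e by linarith
  then show ?thesis using a1 a2 H unfolding D_def by linarith
qed

lemma reg_analytic:
  fixes f :: "real \<Rightarrow> real"
  assumes analytic: "real_analytic_on f {0<..}" and x: "x > 0"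
  shows "(f has_real_derivative deriv f x) (at x)"
    and "(deriv f has_real_derivative deriv (deriv f) x) (at x)"
proof -
  have "\<exists>r>0. \<exists>a::nat\<Rightarrow>real. \<forall>y. \<bar>y - x\<bar> < r \<longrightarrow> (\<lambda>n. a n * (y - x)^n) sums f y"
    using analytic x unfolding real_analytic_on_def by simp
  then obtain r a where r: "r > 0" and S0: "\<forall>y. \<bar>y - x\<bar> < r \<longrightarrow> (\<lambda>n. a n * (y - x)^n) sums f y"
    by blast
  have x0: "\<bar>x - x\<bar> < r" using r by simp
  show "(f has_real_derivative deriv f x) (at x)" using ps_regular(1)[OF r S0 x0] .
  show "(deriv f has_real_derivative deriv (deriv f) x) (at x)" using ps_regular(2)[OF r S0 x0] .
qed

theorem proposition4:
  fixes f :: "real \<Rightarrow> real"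
  assumes analytic: "real_analytic_on f {0<..}"
    and nonzero: "\<exists>x>0. f x \<noteq> 0"
    and zeros_cond: "\<And>xs :: nat \<Rightarrow> real.
        (\<forall>j. xs j > 0) \<Longrightarrow>
        (xs \<longlonglongrightarrow> 0 \<or> filterlim xs at_top sequentially) \<Longrightarrow>
        ((\<lambda>j. reldist_set (xs j) {x. x > 0 \<and> f x = 0}) \<longlonglongrightarrow> 0) \<Longrightarrow>
        ((\<lambda>j. kappa f (xs j)) \<longlonglongrightarrow> \<infinity>)"
    and H_cond: "\<exists>C>0. Limsup (at_right 0) (\<lambda>x. ereal \<bar>Hf f x\<bar>) \<le> ereal C \<and>
                       Limsup at_top (\<lambda>x. ereal \<bar>Hf f x\<bar>) \<le> ereal C"
  shows "amenable f {0<..}"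
proof -
  obtain B0 where B0: "\<forall>x>0. f x \<noteq> 0 \<longrightarrow> \<bar>Hf f x\<bar> \<le> B0"
    using global_bound[OF analytic H_cond] by blast
  define B where "B = max B0 0"
  have B: "\<And>x. x > 0 \<Longrightarrow> f x \<noteq> 0 \<Longrightarrow> \<bar>Hf f x\<bar> \<le> B" using B0 unfolding B_def by force
  define M where "M = B + 3/2"
  have M0: "M > 0" unfolding M_def B_def by simp
  define C where "C = 4 * M + 5"
  have C0: "C > 0" "C \<ge> 5" "4 * M \<le> C" unfolding C_def using M0 by auto
  define g where "g t = f (exp t)" for t
  define g1 where "g1 t = exp t * deriv f (exp t)" for t
  define g2 where "g2 t = exp t * deriv f (exp t) + exp t * exp t * deriv (deriv f) (exp t)" for t
  have d1: "(g has_real_derivative g1 t) (at t)" for t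
  proof -
    have "(g has_real_derivative deriv f (exp t) * exp t) (at t)"
      unfolding g_def by (rule DERIV_chain2[OF reg_analytic(1)[OF analytic] DERIV_exp]) simp
    then show ?thesis unfolding g1_def by (simp add: mult.commute)
  qed
  have d2: "(g1 has_real_derivative g2 t) (at t)" for t
  proof -
    have dd: "((\<lambda>t. deriv f (exp t)) has_real_derivative deriv (deriv f) (exp t) * exp t) (at t)"
      by (rule DERIV_chain2[OF reg_analytic(2)[OF analytic] DERIV_exp]) simp
    have "(g1 has_real_derivative exp t * deriv f (exp t) + (deriv (deriv f) (exp t) * exp t) * exp t) (at t)"
      unfolding g1_def by (rule DERIV_mult[OF DERIV_exp dd])
    then show ?thesis unfolding g2_def by (simp add: algebra_simps)
  qed
  have bnd: "\<bar>(g t * g2 t - (g1 t)^2) / ((g t)^2 + (g1 t)^2)\<bar> \<le> M" if gt: "g t \<noteq> 0" for t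
  proof -
    define x where "x = exp t"
    have x0: "x > 0" unfolding x_def by simp
    define F where "F = f x"
    define P where "P = x * deriv f x"
    define Q where "Q = x * x * deriv (deriv f) x"
    have F0: "F \<noteq> 0" using gt unfolding F_def x_def g_def .
    have "Hf f x = F * Q / (F^2 + P^2)"
      unfolding Hf_def F_def P_def Q_def by (simp add: power2_eq_square algebra_simps)
    then have H: "\<bar>F * Q / (F^2 + P^2)\<bar> \<le> B" using B[OF x0] F0 unfolding F_def by simp
    have "(g t * g2 t - (g1 t)^2) / ((g t)^2 + (g1 t)^2) = (F * (P + Q) - P^2) / (F^2 + P^2)"
      unfolding g_def g1_def g2_def F_def P_def Q_def x_def by (simp add: algebra_simps)
    then show ?thesis using expr_bound[OF F0 H] unfolding M_def by simp
  qed
  show ?thesis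
    unfolding amenable_def
  proof (intro exI[of _ C] conjI C0(1) ballI impI)
    fix x :: real assume x: "x \<in> {0<..}" and kx: "kappa f x < \<infinity>"
    have x0: "x > 0" using x by simp
    have fx: "f x \<noteq> 0" using kx x0 unfolding kappa_def by auto
    define L0 where "L0 = x * deriv f x / f x"
    define m0 where "m0 = 1 + \<bar>L0\<bar>"
    have m01: "m0 \<ge> 1" unfolding m0_def by simp
    have kap: "kappa f x = ereal \<bar>L0\<bar>"
      unfolding kappa_def L0_def using x0 fx by (simp add: abs_mult abs_divide)
    have mux: "mu f x = ereal m0" unfolding mu_def kap m0_def by simp
    define \<delta> where "\<delta> = 1 / (C * m0)"
    have \<delta>0: "\<delta> > 0" unfolding \<delta>_def using C0 m01 by simp
    have rad: "1 / (ereal C * mu f x) = ereal \<delta>"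
      unfolding mux \<delta>_def using C0 m01 by (simp add: one_ereal_def)
    have yprops: "y > 0 \<and> \<bar>ln y - ln x\<bar> < \<delta>" if "reldist y x < ereal \<delta>" for y
    proof -
      have "y * x > 0"
      proof (rule ccontr)
        assume "\<not> y * x > 0"
        then have "reldist y x = \<infinity>" unfolding reldist_def using x0 by auto
        then show False using that by simp
      qed
      then have y0: "y > 0" using x0 by (simp add: zero_less_mult_iff)
      then have "reldist y x = ereal \<bar>ln (x / y)\<bar>" unfolding reldist_def using x0 by simp
      then have "\<bar>ln (x / y)\<bar> < \<delta>" using that by simp
      moreover have "ln (x / y) = ln x - ln y" using x0 y0 by (simp add: ln_div)
      ultimately show ?thesis using y0 by (simp add: abs_minus_commute)
    qed
    let ?B = "{y. reldist y x < 1 / (ereal C * mu f x)}"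
    have "?B \<subseteq> {0<..} \<and> (\<forall>y\<in>?B. mu f y \<le> ereal C * mu f x)"
    proof (intro conjI ballI subsetI)
      fix y assume "y \<in> ?B"
      then show "y \<in> {0<..}" using yprops unfolding rad by auto
    next
      fix y assume "y \<in> ?B"
      then have y0: "y > 0" and yd: "\<bar>ln y - ln x\<bar> < \<delta>" using yprops unfolding rad by auto
      define a where "a = ln x"
      define b where "b = ln y"
      have ga: "g a \<noteq> 0" unfolding g_def a_def using x0 fx by simp
      have La: "g1 a / g a = L0" unfolding g1_def g_def a_def L0_def using x0 by simp
      have Lb: "g1 b / g b = y * deriv f y / f y" unfolding g1_def g_def b_def using y0 by simp
      have gap: "pi/2 - \<bar>arctan L0\<bar> \<ge> 1/(2*m0)" using arctan_gap_lb[of L0] unfolding m0_def .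
      have Md: "M * \<delta> \<le> 1/(4*m0)"
      proof -
        have "M * \<delta> = M / (C * m0)" unfolding \<delta>_def by simp
        also have "\<dots> \<le> (C/4) / (C * m0)" using C0 m01 M0
          by (intro divide_right_mono) auto
        also have "\<dots> = 1/(4*m0)" using C0 by simp
        finally show ?thesis .
      qed
      have Mab: "M * \<bar>b - a\<bar> \<le> 1/(4*m0)"
      proof -
        have "M * \<bar>b - a\<bar> \<le> M * \<delta>" using yd M0 unfolding a_def b_def by simp
        then show ?thesis using Md by linarith
      qed
      have q: "1/(4*m0) < 1/(2*m0)" using m01 by (simp add: divide_simps)
      have small: "M * \<bar>b - a\<bar> < pi/2 - \<bar>arctan (g1 a / g a)\<bar>"
        unfolding La using Mab q gap by linarith
      from two_sided[OF d1 d2 bnd ga small]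
      have gb: "g b \<noteq> 0" and arc: "\<bar>arctan (g1 b / g b) - arctan (g1 a / g a)\<bar> \<le> M * \<bar>b - a\<bar>"
        by auto
      have fy: "f y \<noteq> 0" using gb y0 unfolding g_def b_def by simp
      define L1 where "L1 = y * deriv f y / f y"
      have "\<bar>arctan L1\<bar> \<le> pi/2 - 1/(4*m0)"
        using arc Mab gap unfolding La Lb L1_def[symmetric] by linarith
      then have L1b: "\<bar>L1\<bar> \<le> 4 * m0"
        using arctan_gap_ub[of L1 "1/(4*m0)"] m01 by simp
      have muy: "mu f y = ereal (1 + \<bar>L1\<bar>)"
        unfolding mu_def kappa_def L1_def using y0 fy by (simp add: abs_mult abs_divide)
      have "1 + \<bar>L1\<bar> \<le> C * m0"
      proof -
        have "1 + \<bar>L1\<bar> \<le> 5 * m0" using L1b m01 by linarith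
        also have "\<dots> \<le> C * m0" using C0 m01 by (intro mult_right_mono) auto
        finally show ?thesis .
      qed
      then show "mu f y \<le> ereal C * mu f x" unfolding muy mux by simp
    qed
    then show "let B = ?B in B \<subseteq> {0<..} \<and> (\<forall>y\<in>B. mu f y \<le> ereal C * mu f x)"
      by simp
  qed
qed

end
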